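(* Let $\alpha:U\to V$ be a surjective h-transmission between commutative supertropical monoids, and assume that $U$ is a semiring. Then $V$ is a semiring.
   Context: All monoids are commutative. A supertropical monoid is a monoid $(U,\cdot)$ with absorbing element $0$ and distinguished idempotent $e$ with $ex=0\Rightarrow x=0$, together with a total ordering on $eU$, compatible with multiplication and with $0$ least, making $eU$ a bipotent semiring (addition $=\max$). Define $x+y:=y$ if $ex<ey$, $x$ if $ex>ey$, $ex$ if $ex=ey$; $U$ is a semiring if this addition is associative and distributive. A transmission $\alpha:U\to V$ is a map with $\alpha(0)=0$, $\alpha(1)=1$, multiplicative, $\alpha(e_U)=e_V$, order-preserving on $eU$. An h-transmission is a transmission such that for all $x,y\in U$: if $ex<ey$ and $\alpha(ex)=\alpha(ey)$, then $\alpha(y)\in eV$. *)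

theory Defs
  imports Main
begin

text \<open>A commutative supertropical monoid is represented on a whole type 'a, with
  multiplication mul, unit one, absorbing element zero, distinguished idempotent e,
  and a relation le which is a total order on eU = {mul e x | x}.\<close>

definition ghost :: "('a \<Rightarrow> 'a \<Rightarrow> 'a) \<Rightarrow> 'a \<Rightarrow> 'a set" where
  "ghost mul e = {mul e x | x. True}"

definition supertropical_monoid ::
  "('a \<Rightarrow> 'a \<Rightarrow> 'a) \<Rightarrow> 'a \<Rightarrow> 'a \<Rightarrow> 'a \<Rightarrow> ('a \<Rightarrow> 'a \<Rightarrow> bool) \<Rightarrow> bool" where
  "supertropical_monoid mul one zero e le \<longleftrightarrow>
     (\<forall>x y z. mul (mul x y) z = mul x (mul y z)) \<and>
     (\<forall>x y. mul x y = mul y x) \<and>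
     (\<forall>x. mul one x = x) \<and>
     (\<forall>x. mul zero x = zero) \<and>
     mul e e = e \<and>
     (\<forall>x. mul e x = zero \<longrightarrow> x = zero) \<and>
     \<comment> \<open>le is a total order on eU\<close>
     (\<forall>a\<in>ghost mul e. le a a) \<and>
     (\<forall>a\<in>ghost mul e. \<forall>b\<in>ghost mul e. le a b \<and> le b a \<longrightarrow> a = b) \<and>
     (\<forall>a\<in>ghost mul e. \<forall>b\<in>ghost mul e. \<forall>c\<in>ghost mul e. le a b \<and> le b c \<longrightarrow> le a c) \<and>
     (\<forall>a\<in>ghost mul e. \<forall>b\<in>ghost mul e. le a b \<or> le b a) \<and>
     \<comment> \<open>compatible with multiplication\<close>
     (\<forall>a\<in>ghost mul e. \<forall>b\<in>ghost mul e. \<forall>c\<in>ghost mul e. le a b \<longrightarrow> le (mul a c) (mul b c)) \<and>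
     \<comment> \<open>0 is least\<close>
     (\<forall>a\<in>ghost mul e. le zero a)"

definition lt_of :: "('a \<Rightarrow> 'a \<Rightarrow> bool) \<Rightarrow> 'a \<Rightarrow> 'a \<Rightarrow> bool" where
  "lt_of le a b \<longleftrightarrow> le a b \<and> a \<noteq> b"

definition st_add :: "('a \<Rightarrow> 'a \<Rightarrow> 'a) \<Rightarrow> 'a \<Rightarrow> ('a \<Rightarrow> 'a \<Rightarrow> bool) \<Rightarrow> 'a \<Rightarrow> 'a \<Rightarrow> 'a" where
  "st_add mul e le x y =
     (if lt_of le (mul e x) (mul e y) then y
      else if lt_of le (mul e y) (mul e x) then x
      else mul e x)"

definition st_semiring :: "('a \<Rightarrow> 'a \<Rightarrow> 'a) \<Rightarrow> 'a \<Rightarrow> ('a \<Rightarrow> 'a \<Rightarrow> bool) \<Rightarrow> bool" where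
  "st_semiring mul e le \<longleftrightarrow>
     (\<forall>x y z. st_add mul e le (st_add mul e le x y) z = st_add mul e le x (st_add mul e le y z)) \<and>
     (\<forall>x y z. mul x (st_add mul e le y z) = st_add mul e le (mul x y) (mul x z))"

definition transmission ::
  "('a \<Rightarrow> 'a \<Rightarrow> 'a) \<Rightarrow> 'a \<Rightarrow> 'a \<Rightarrow> 'a \<Rightarrow> ('a \<Rightarrow> 'a \<Rightarrow> bool) \<Rightarrow>
   ('b \<Rightarrow> 'b \<Rightarrow> 'b) \<Rightarrow> 'b \<Rightarrow> 'b \<Rightarrow> 'b \<Rightarrow> ('b \<Rightarrow> 'b \<Rightarrow> bool) \<Rightarrow> ('a \<Rightarrow> 'b) \<Rightarrow> bool" where
  "transmission mulU oneU zeroU eU leU mulV oneV zeroV eV leV \<alpha> \<longleftrightarrow>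
     \<alpha> zeroU = zeroV \<and> \<alpha> oneU = oneV \<and>
     (\<forall>x y. \<alpha> (mulU x y) = mulV (\<alpha> x) (\<alpha> y)) \<and>
     \<alpha> eU = eV \<and>
     (\<forall>a\<in>ghost mulU eU. \<forall>b\<in>ghost mulU eU. leU a b \<longrightarrow> leV (\<alpha> a) (\<alpha> b))"

definition h_transmission ::
  "('a \<Rightarrow> 'a \<Rightarrow> 'a) \<Rightarrow> 'a \<Rightarrow> 'a \<Rightarrow> 'a \<Rightarrow> ('a \<Rightarrow> 'a \<Rightarrow> bool) \<Rightarrow>
   ('b \<Rightarrow> 'b \<Rightarrow> 'b) \<Rightarrow> 'b \<Rightarrow> 'b \<Rightarrow> 'b \<Rightarrow> ('b \<Rightarrow> 'b \<Rightarrow> bool) \<Rightarrow> ('a \<Rightarrow> 'b) \<Rightarrow> bool" where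
  "h_transmission mulU oneU zeroU eU leU mulV oneV zeroV eV leV \<alpha> \<longleftrightarrow>
     transmission mulU oneU zeroU eU leU mulV oneV zeroV eV leV \<alpha> \<and>
     (\<forall>x y. lt_of leU (mulU eU x) (mulU eU y) \<and> \<alpha> (mulU eU x) = \<alpha> (mulU eU y)
        \<longrightarrow> \<alpha> y \<in> ghost mulV eV)"

end

theory Submission
  imports Defs
begin

lemma hom_add:
  assumes U: "supertropical_monoid mulU oneU zeroU eU leU"
    and V: "supertropical_monoid mulV oneV zeroV eV leV"
    and H: "h_transmission mulU oneU zeroU eU leU mulV oneV zeroV eV leV \<alpha>"
  shows "\<alpha> (st_add mulU eU leU x y) = st_add mulV eV leV (\<alpha> x) (\<alpha> y)"
proof -
  define a where "a = mulU eU x"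
  define b where "b = mulU eU y"
  have ga: "a \<in> ghost mulU eU" and gb: "b \<in> ghost mulU eU"
    unfolding a_def b_def ghost_def by auto
  have T: "transmission mulU oneU zeroU eU leU mulV oneV zeroV eV leV \<alpha>"
    using H unfolding h_transmission_def by auto
  have hm: "\<And>x y. \<alpha> (mulU x y) = mulV (\<alpha> x) (\<alpha> y)" and he: "\<alpha> eU = eV"
    and mono: "\<And>a b. a\<in>ghost mulU eU \<Longrightarrow> b\<in>ghost mulU eU \<Longrightarrow> leU a b \<Longrightarrow> leV (\<alpha> a) (\<alpha> b)"
    using T unfolding transmission_def by auto
  have hh: "\<And>x y. lt_of leU (mulU eU x) (mulU eU y) \<Longrightarrow> \<alpha> (mulU eU x) = \<alpha> (mulU eU y)
        \<Longrightarrow> \<alpha> y \<in> ghost mulV eV"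
    using H unfolding h_transmission_def by auto
  have aa: "\<alpha> a = mulV eV (\<alpha> x)" and ab: "\<alpha> b = mulV eV (\<alpha> y)"
    unfolding a_def b_def by (simp_all add: hm he)
  have Uas: "\<And>a b. a\<in>ghost mulU eU \<Longrightarrow> b\<in>ghost mulU eU \<Longrightarrow> leU a b \<Longrightarrow> leU b a \<Longrightarrow> a = b"
    and Utot: "\<And>a b. a\<in>ghost mulU eU \<Longrightarrow> b\<in>ghost mulU eU \<Longrightarrow> leU a b \<or> leU b a"
    using U unfolding supertropical_monoid_def by blast+
  have Vas: "\<And>a b. a\<in>ghost mulV eV \<Longrightarrow> b\<in>ghost mulV eV \<Longrightarrow> leV a b \<Longrightarrow> leV b a \<Longrightarrow> a = b"
    and Vee: "mulV eV eV = eV"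
    and Vassoc: "\<And>x y z. mulV (mulV x y) z = mulV x (mulV y z)"
    using V unfolding supertropical_monoid_def by blast+
  have gV: "\<And>w. w \<in> ghost mulV eV \<Longrightarrow> mulV eV w = w"
    unfolding ghost_def by (auto simp: Vassoc[symmetric] Vee)
  have gVa: "\<alpha> a \<in> ghost mulV eV" and gVb: "\<alpha> b \<in> ghost mulV eV"
    by (auto simp: aa ab ghost_def)
  show ?thesis
  proof (cases "lt_of leU a b")
    case True
    hence r: "st_add mulU eU leU x y = y" unfolding st_add_def a_def b_def by simp
    have le: "leV (\<alpha> a) (\<alpha> b)" using True mono ga gb unfolding lt_of_def by auto
    show ?thesis
    proof (cases "\<alpha> a = \<alpha> b")
      case False
      hence "lt_of leV (mulV eV (\<alpha> x)) (mulV eV (\<alpha> y))" using le aa ab unfolding lt_of_def by simp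
      then show ?thesis using r unfolding st_add_def by simp
    next
      case eq: True
      have "\<alpha> y \<in> ghost mulV eV" using hh[of x y] True eq unfolding a_def b_def by simp
      hence "mulV eV (\<alpha> y) = \<alpha> y" by (rule gV)
      then show ?thesis using r eq aa ab unfolding st_add_def lt_of_def by simp
    qed
  next
    case nab: False
    show ?thesis
    proof (cases "lt_of leU b a")
      case True
      have nab': "\<not> lt_of leU (mulU eU x) (mulU eU y)" using nab unfolding a_def b_def .
      hence r: "st_add mulU eU leU x y = x" using True unfolding st_add_def a_def b_def by simp
      have le: "leV (\<alpha> b) (\<alpha> a)" using True mono ga gb unfolding lt_of_def by auto
      show ?thesis
      proof (cases "\<alpha> a = \<alpha> b")
        case False
        hence "lt_of leV (mulV eV (\<alpha> y)) (mulV eV (\<alpha> x))" using le aa ab unfolding lt_of_def by simp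
        moreover have "\<not> lt_of leV (mulV eV (\<alpha> x)) (mulV eV (\<alpha> y))"
          using le Vas[OF gVa gVb] aa ab False unfolding lt_of_def by auto
        ultimately show ?thesis using r unfolding st_add_def by simp
      next
        case eq: True
        have "\<alpha> x \<in> ghost mulV eV" using hh[of y x] True eq unfolding a_def b_def by simp
        hence "mulV eV (\<alpha> x) = \<alpha> x" by (rule gV)
        then show ?thesis using r eq aa ab unfolding st_add_def lt_of_def by simp
      qed
    next
      case False
      have "a = b" using nab False Uas[OF ga gb] Utot[OF ga gb] unfolding lt_of_def by auto
      hence r: "st_add mulU eU leU x y = a" unfolding st_add_def lt_of_def a_def b_def by simp
      have "\<alpha> a = \<alpha> b" using \<open>a = b\<close> by simp
      then show ?thesis using r aa ab unfolding st_add_def lt_of_def by simp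
    qed
  qed
qed

theorem theorem5p7:
  fixes mulU :: "'a \<Rightarrow> 'a \<Rightarrow> 'a" and oneU zeroU eU :: 'a and leU :: "'a \<Rightarrow> 'a \<Rightarrow> bool"
    and mulV :: "'b \<Rightarrow> 'b \<Rightarrow> 'b" and oneV zeroV eV :: 'b and leV :: "'b \<Rightarrow> 'b \<Rightarrow> bool"
    and \<alpha> :: "'a \<Rightarrow> 'b"
  assumes "supertropical_monoid mulU oneU zeroU eU leU"
    and "supertropical_monoid mulV oneV zeroV eV leV"
    and "h_transmission mulU oneU zeroU eU leU mulV oneV zeroV eV leV \<alpha>"
    and "surj \<alpha>"
    and "st_semiring mulU eU leU"
  shows "st_semiring mulV eV leV"
proof -
  note hom = hom_add[OF assms(1,2,3)]
  have hm: "\<And>x y. \<alpha> (mulU x y) = mulV (\<alpha> x) (\<alpha> y)"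
    using assms(3) unfolding h_transmission_def transmission_def by auto
  have as: "\<And>x y z. st_add mulU eU leU (st_add mulU eU leU x y) z = st_add mulU eU leU x (st_add mulU eU leU y z)"
    and di: "\<And>x y z. mulU x (st_add mulU eU leU y z) = st_add mulU eU leU (mulU x y) (mulU x z)"
    using assms(5) unfolding st_semiring_def by auto
  have sj: "\<And>v. \<exists>u. v = \<alpha> u" using assms(4) by (metis surj_def)
  show ?thesis unfolding st_semiring_def
  proof (intro conjI allI)
    fix x y z
    obtain a b c where "x = \<alpha> a" "y = \<alpha> b" "z = \<alpha> c" using sj by metis
    then show "st_add mulV eV leV (st_add mulV eV leV x y) z = st_add mulV eV leV x (st_add mulV eV leV y z)"
      by (simp only: hom[symmetric] as)
  next
    fix x y z
    obtain a b c where "x = \<alpha> a" "y = \<alpha> b" "z = \<alpha> c" using sj by metis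
    then show "mulV x (st_add mulV eV leV y z) = st_add mulV eV leV (mulV x y) (mulV x z)"
      by (simp only: hom[symmetric] hm[symmetric] di)
  qed
qed

end
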